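(* Let $G$ be a locally Hausdorff, locally compact groupoid such that $G^{(0)}$ is paracompact. Then $G$ has a fundamental system of diagonally compact neighborhoods of $G^{(0)}$: for every neighborhood $V$ of $G^{(0)}$ in $G$ there is a diagonally compact neighborhood $U$ of $G^{(0)}$ with $U\subset V$.
   Context: A locally Hausdorff, locally compact groupoid: groupoid operations continuous, $G^{(0)}$ Hausdorff, each point has a compact Hausdorff neighborhood, range map open. "Compact" means the finite-subcover property (not necessarily Hausdorff). A subset $U\subset G$ is diagonally compact if $UW=\{\alpha\beta:\alpha\in U,\beta\in W, s(\alpha)=r(\beta)\}$ and $WU$ are compact whenever $W\subset G$ is compact. *)

theory Defs
  imports "HOL-Analysis.Analysis"
begin

text \<open>A (possibly non-Hausdorff) groupoid whose underlying set is the carrier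
  topspace X.  G0 is the unit space, r and s the range and source maps,
  iv the inversion and m the (partial) multiplication, meaningful on the
  composable pairs (a,b) with s a = r b.\<close>

definition composable :: "'a topology \<Rightarrow> ('a \<Rightarrow> 'a) \<Rightarrow> ('a \<Rightarrow> 'a) \<Rightarrow> ('a \<times> 'a) set" where
  "composable X r s = {(a,b). a \<in> topspace X \<and> b \<in> topspace X \<and> s a = r b}"

definition groupoid_on ::
  "'a topology \<Rightarrow> 'a set \<Rightarrow> ('a \<Rightarrow> 'a) \<Rightarrow> ('a \<Rightarrow> 'a) \<Rightarrow> ('a \<Rightarrow> 'a) \<Rightarrow> ('a \<Rightarrow> 'a \<Rightarrow> 'a) \<Rightarrow> bool" where
  "groupoid_on X G0 r s iv m \<longleftrightarrow>
     G0 \<subseteq> topspace X \<and>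
     (\<forall>a\<in>topspace X. r a \<in> G0 \<and> s a \<in> G0 \<and> iv a \<in> topspace X) \<and>
     (\<forall>u\<in>G0. r u = u \<and> s u = u) \<and>
     (\<forall>(a,b)\<in>composable X r s. m a b \<in> topspace X \<and> r (m a b) = r a \<and> s (m a b) = s b) \<and>
     (\<forall>a\<in>topspace X. \<forall>b\<in>topspace X. \<forall>c\<in>topspace X.
        s a = r b \<longrightarrow> s b = r c \<longrightarrow> m (m a b) c = m a (m b c)) \<and>
     (\<forall>a\<in>topspace X. m (r a) a = a \<and> m a (s a) = a) \<and>
     (\<forall>a\<in>topspace X. r (iv a) = s a \<and> s (iv a) = r a \<and>
        m (iv a) a = s a \<and> m a (iv a) = r a)"

definition lhlc_groupoid ::
  "'a topology \<Rightarrow> 'a set \<Rightarrow> ('a \<Rightarrow> 'a) \<Rightarrow> ('a \<Rightarrow> 'a) \<Rightarrow> ('a \<Rightarrow> 'a) \<Rightarrow> ('a \<Rightarrow> 'a \<Rightarrow> 'a) \<Rightarrow> bool" where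
  "lhlc_groupoid X G0 r s iv m \<longleftrightarrow>
     groupoid_on X G0 r s iv m \<and>
     continuous_map X X r \<and> continuous_map X X s \<and> continuous_map X X iv \<and>
     continuous_map (subtopology (prod_topology X X) (composable X r s)) X (\<lambda>(a,b). m a b) \<and>
     Hausdorff_space (subtopology X G0) \<and>
     (\<forall>x\<in>topspace X. \<exists>K. compactin X K \<and> Hausdorff_space (subtopology X K) \<and>
        x \<in> X interior_of K) \<and>
     open_map X (subtopology X G0) r"

definition paracompact_space :: "'a topology \<Rightarrow> bool" where
  "paracompact_space X \<longleftrightarrow> Hausdorff_space X \<and>
     (\<forall>\<U>. (\<forall>U\<in>\<U>. openin X U) \<and> topspace X \<subseteq> \<Union>\<U> \<longrightarrow>
       (\<exists>\<V>. (\<forall>V\<in>\<V>. openin X V) \<and> topspace X \<subseteq> \<Union>\<V> \<and>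
             (\<forall>V\<in>\<V>. \<exists>U\<in>\<U>. V \<subseteq> U) \<and>
             (\<forall>x\<in>topspace X. \<exists>N. openin X N \<and> x \<in> N \<and>
                finite {V\<in>\<V>. V \<inter> N \<noteq> {}})))"

definition setprod :: "('a \<Rightarrow> 'a) \<Rightarrow> ('a \<Rightarrow> 'a) \<Rightarrow> ('a \<Rightarrow> 'a \<Rightarrow> 'a) \<Rightarrow> 'a set \<Rightarrow> 'a set \<Rightarrow> 'a set" where
  "setprod r s m U W = {m a b | a b. a \<in> U \<and> b \<in> W \<and> s a = r b}"

definition diagonally_compact ::
  "'a topology \<Rightarrow> ('a \<Rightarrow> 'a) \<Rightarrow> ('a \<Rightarrow> 'a) \<Rightarrow> ('a \<Rightarrow> 'a \<Rightarrow> 'a) \<Rightarrow> 'a set \<Rightarrow> bool" where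
  "diagonally_compact X r s m U \<longleftrightarrow>
     (\<forall>W. compactin X W \<longrightarrow>
        compactin X (setprod r s m U W) \<and> compactin X (setprod r s m W U))"

end

theory Submission
  imports Defs
begin

lemma cpt_nbhd_in_open:
  assumes lc: "\<forall>x\<in>topspace X. \<exists>K. compactin X K \<and> Hausdorff_space (subtopology X K) \<and>
        x \<in> X interior_of K"
    and Op: "openin X Op" and u: "u \<in> Op"
  shows "\<exists>C. compactin X C \<and> u \<in> X interior_of C \<and> C \<subseteq> Op"
proof -
  have ut: "u \<in> topspace X" using Op u openin_subset by blast
  then obtain K where K: "compactin X K" "Hausdorff_space (subtopology X K)" "u \<in> X interior_of K"
    using lc by blast
  define Y where "Y = subtopology X K"
  have KX: "K \<subseteq> topspace X" using K compactin_subset_topspace by blast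
  have cY: "compact_space Y" using K compactin_subspace Y_def by blast
  have "regular_space Y" using cY K(2) Y_def compact_Hausdorff_imp_regular_space by blast
  hence nb: "neighbourhood_base_of (closedin Y) Y" using neighbourhood_base_of_closedin by blast
  define W where "W = Op \<inter> X interior_of K"
  have Wo: "openin X W" using Op W_def by auto
  have WK: "W \<subseteq> K" unfolding W_def using interior_of_subset[of X K] by blast
  have "W = W \<inter> K" using WK by blast
  hence "openin Y W" unfolding Y_def openin_subtopology using Wo by blast
  moreover have "u \<in> W" using u K(3) W_def by blast
  ultimately have "\<exists>U D. openin Y U \<and> closedin Y D \<and> u \<in> U \<and> U \<subseteq> D \<and> D \<subseteq> W"
    using nb[unfolded neighbourhood_base_of, rule_format, of W u] by blast
  then obtain U D where UD: "openin Y U" "closedin Y D" "u \<in> U" "U \<subseteq> D" "D \<subseteq> W"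
    by blast
  have "compactin Y K" unfolding Y_def compactin_subtopology using K by blast
  hence "compactin Y D" using UD closed_compactin WK by blast
  hence Dc: "compactin X D" unfolding Y_def compactin_subtopology by blast
  obtain U' where U': "openin X U'" "U = U' \<inter> K" using UD(1) unfolding Y_def openin_subtopology by blast
  have "U \<subseteq> X interior_of K" using UD(4,5) unfolding W_def by blast
  hence "U = U' \<inter> X interior_of K" using U'(2) interior_of_subset[of X K] by blast
  hence "openin X U" using U' by auto
  hence "U \<subseteq> X interior_of D" using UD interior_of_maximal by blast
  moreover have "D \<subseteq> Op" using UD(5) unfolding W_def by blast
  ultimately show ?thesis using Dc UD(3) by blast
qed

lemma lf_finite:
  assumes lf: "\<forall>x\<in>topspace Y. \<exists>N. openin Y N \<and> x \<in> N \<and> finite {V\<in>\<V>. V \<inter> N \<noteq> {}}"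
    and L: "compactin Y L"
  shows "finite {V\<in>\<V>. Y closure_of V \<inter> L \<noteq> {}}"
proof -
  have LY: "L \<subseteq> topspace Y" using L compactin_subset_topspace by blast
  obtain N where N: "\<And>x. x \<in> topspace Y \<Longrightarrow> openin Y (N x) \<and> x \<in> N x \<and> finite {V\<in>\<V>. V \<inter> N x \<noteq> {}}"
    using lf by metis
  have "\<forall>M\<in>N ` L. openin Y M" using N LY by blast
  moreover have "L \<subseteq> \<Union>(N ` L)" using N LY by blast
  ultimately obtain F where F: "finite F" "F \<subseteq> N ` L" "L \<subseteq> \<Union>F"
    using L unfolding compactin_def by meson
  have sub: "{V\<in>\<V>. Y closure_of V \<inter> L \<noteq> {}} \<subseteq> (\<Union>M\<in>F. {V\<in>\<V>. V \<inter> M \<noteq> {}})"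
  proof
    fix V assume V: "V \<in> {V\<in>\<V>. Y closure_of V \<inter> L \<noteq> {}}"
    then obtain y where y: "y \<in> Y closure_of V" "y \<in> L" by blast
    then obtain M where M: "M \<in> F" "y \<in> M" using F(3) by blast
    have "openin Y M" using M(1) F(2) N LY by blast
    hence "M \<inter> V \<noteq> {}" using openin_Int_closure_of_eq_empty[of Y M V] y(1) M(2) by blast
    thus "V \<in> (\<Union>M\<in>F. {V\<in>\<V>. V \<inter> M \<noteq> {}})" using V M(1) by blast
  qed
  have "\<forall>M\<in>F. finite {V\<in>\<V>. V \<inter> M \<noteq> {}}" using F(2) N LY by blast
  hence "finite (\<Union>M\<in>F. {V\<in>\<V>. V \<inter> M \<noteq> {}})" using F(1) by blast
  thus ?thesis using sub finite_subset by blast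
qed

lemma composable_closed:
  assumes "continuous_map X (subtopology X G0) r" "continuous_map X (subtopology X G0) s"
    "Hausdorff_space (subtopology X G0)" "G0 \<subseteq> topspace X"
  shows "closedin (prod_topology X X) (composable X r s)"
proof -
  define Y where "Y = subtopology X G0"
  have "continuous_map (prod_topology X X) (prod_topology Y Y) (\<lambda>p. (s (fst p), r (snd p)))"
  proof (rule continuous_map_pairedI)
    show "continuous_map (prod_topology X X) Y (\<lambda>p. s (fst p))"
      using continuous_map_compose[OF continuous_map_fst assms(2)] by (simp add: o_def Y_def)
    show "continuous_map (prod_topology X X) Y (\<lambda>p. r (snd p))"
      using continuous_map_compose[OF continuous_map_snd assms(1)] by (simp add: o_def Y_def)
  qed
  moreover have "closedin (prod_topology Y Y) ((\<lambda>x. (x,x)) ` topspace Y)"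
    using assms(3) unfolding Y_def Hausdorff_space_closedin_diagonal .
  ultimately have "closedin (prod_topology X X) {p \<in> topspace (prod_topology X X). (s (fst p), r (snd p)) \<in> (\<lambda>x. (x,x)) ` topspace Y}"
    by (rule closedin_continuous_map_preimage)
  moreover have "{p \<in> topspace (prod_topology X X). (s (fst p), r (snd p)) \<in> (\<lambda>x. (x,x)) ` topspace Y} = composable X r s"
  proof -
    have "\<And>a. a \<in> topspace X \<Longrightarrow> s a \<in> topspace Y"
      using continuous_map_image_subset_topspace[OF assms(2)] unfolding Y_def by blast
    thus ?thesis unfolding composable_def topspace_prod_topology by (auto, metis rev_image_eqI)
  qed
  ultimately show ?thesis by (simp only:)
qed

lemma lhlc_basics:
  assumes G: "lhlc_groupoid X G0 r s iv m"
  shows "G0 \<subseteq> topspace X" "\<And>a. a \<in> topspace X \<Longrightarrow> r a \<in> G0 \<and> s a \<in> G0"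
    "\<And>u. u \<in> G0 \<Longrightarrow> r u = u \<and> s u = u"
    "continuous_map X (subtopology X G0) r" "continuous_map X (subtopology X G0) s"
    "Hausdorff_space (subtopology X G0)"
    "continuous_map (subtopology (prod_topology X X) (composable X r s)) X (\<lambda>(a,b). m a b)"
    "\<forall>x\<in>topspace X. \<exists>K. compactin X K \<and> Hausdorff_space (subtopology X K) \<and> x \<in> X interior_of K"
proof -
  have gr: "groupoid_on X G0 r s iv m" using G unfolding lhlc_groupoid_def by (elim conjE)
  show G0X: "G0 \<subseteq> topspace X" using gr unfolding groupoid_on_def by (elim conjE)
  have rsG0: "\<forall>a\<in>topspace X. r a \<in> G0 \<and> s a \<in> G0 \<and> iv a \<in> topspace X" using gr unfolding groupoid_on_def by (elim conjE)
  thus rsG: "\<And>a. a \<in> topspace X \<Longrightarrow> r a \<in> G0 \<and> s a \<in> G0" by blast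
  have "\<forall>u\<in>G0. r u = u \<and> s u = u" using gr unfolding groupoid_on_def by (elim conjE)
  thus "\<And>u. u \<in> G0 \<Longrightarrow> r u = u \<and> s u = u" by blast
  have "continuous_map X X r" using G unfolding lhlc_groupoid_def by (elim conjE)
  moreover have "r \<in> topspace X \<rightarrow> G0" using rsG by blast
  ultimately show "continuous_map X (subtopology X G0) r" by (rule continuous_map_into_subtopology)
  have "continuous_map X X s" using G unfolding lhlc_groupoid_def by (elim conjE)
  moreover have "s \<in> topspace X \<rightarrow> G0" using rsG by blast
  ultimately show "continuous_map X (subtopology X G0) s" by (rule continuous_map_into_subtopology)
  show "Hausdorff_space (subtopology X G0)" using G unfolding lhlc_groupoid_def by (elim conjE)
  show "continuous_map (subtopology (prod_topology X X) (composable X r s)) X (\<lambda>(a,b). m a b)"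
    using G unfolding lhlc_groupoid_def by (elim conjE)
  show "\<forall>x\<in>topspace X. \<exists>K. compactin X K \<and> Hausdorff_space (subtopology X K) \<and> x \<in> X interior_of K"
    using G unfolding lhlc_groupoid_def by (elim conjE)
qed

lemma setprod_cpt:
  assumes G: "lhlc_groupoid X G0 r s iv m"
    and Us: "\<And>L. compactin (subtopology X G0) L \<Longrightarrow> compactin X (U \<inter> {a\<in>topspace X. s a \<in> L})"
    and Ur: "\<And>L. compactin (subtopology X G0) L \<Longrightarrow> compactin X (U \<inter> {a\<in>topspace X. r a \<in> L})"
    and W: "compactin X W" and UX: "U \<subseteq> topspace X"
  shows "compactin X (setprod r s m U W) \<and> compactin X (setprod r s m W U)"
proof -
  define Y where "Y = subtopology X G0"
  note B = lhlc_basics[OF G]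
  have rc: "continuous_map X Y r" unfolding Y_def by (rule B(4))
  have sc: "continuous_map X Y s" unfolding Y_def by (rule B(5))
  note mc = B(7)
  have cc: "closedin (prod_topology X X) (composable X r s)"
    using composable_closed[OF B(4) B(5) B(6) B(1)] .
  have WX: "W \<subseteq> topspace X" using W compactin_subset_topspace by blast
  have img: "compactin X (setprod r s m A B)"
    if A: "compactin X A" and B: "compactin X B" for A B
  proof -
    have "compactin (prod_topology X X) (A \<times> B)" using A B compactin_Times by blast
    hence "compactin (prod_topology X X) ((A \<times> B) \<inter> composable X r s)"
      using cc compact_Int_closedin by blast
    hence "compactin (subtopology (prod_topology X X) (composable X r s)) ((A \<times> B) \<inter> composable X r s)"
      unfolding compactin_subtopology by blast
    hence "compactin X ((\<lambda>(a,b). m a b) ` ((A \<times> B) \<inter> composable X r s))"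
      using mc image_compactin by blast
    moreover have "(\<lambda>(a,b). m a b) ` ((A \<times> B) \<inter> composable X r s) = setprod r s m A B"
    proof
      show "(\<lambda>(a,b). m a b) ` ((A \<times> B) \<inter> composable X r s) \<subseteq> setprod r s m A B"
        unfolding setprod_def composable_def by auto
      have "A \<subseteq> topspace X" "B \<subseteq> topspace X" using A B compactin_subset_topspace by auto
      thus "setprod r s m A B \<subseteq> (\<lambda>(a,b). m a b) ` ((A \<times> B) \<inter> composable X r s)"
        unfolding setprod_def composable_def by (auto intro!: image_eqI)
    qed
    ultimately show ?thesis by (simp only:)
  qed
  have rW: "compactin Y (r ` W)" using W rc image_compactin by blast
  have sW: "compactin Y (s ` W)" using W sc image_compactin by blast
  define A where "A = U \<inter> {a\<in>topspace X. s a \<in> r ` W}"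
  define B where "B = U \<inter> {a\<in>topspace X. r a \<in> s ` W}"
  have Ac: "compactin X A" unfolding A_def by (rule Us[OF rW[unfolded Y_def]])
  have Bc: "compactin X B" unfolding B_def by (rule Ur[OF sW[unfolded Y_def]])
  have e1: "setprod r s m U W = setprod r s m A W"
  proof -
    have "\<And>a b. a \<in> U \<Longrightarrow> b \<in> W \<Longrightarrow> s a = r b \<Longrightarrow> a \<in> A"
    proof -
      fix a b assume "a \<in> U" "b \<in> W" "s a = r b"
      thus "a \<in> A" unfolding A_def using UX by auto
    qed
    thus ?thesis unfolding setprod_def A_def by blast
  qed
  have e2: "setprod r s m W U = setprod r s m W B"
  proof -
    have "\<And>a b. a \<in> W \<Longrightarrow> b \<in> U \<Longrightarrow> s a = r b \<Longrightarrow> b \<in> B"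
    proof -
      fix a b assume "a \<in> W" "b \<in> U" "s a = r b"
      thus "b \<in> B" unfolding B_def using UX by (auto intro!: image_eqI)
    qed
    thus ?thesis unfolding setprod_def B_def by blast
  qed
  show ?thesis unfolding e1 e2 using img[OF Ac W] img[OF W Bc] by (rule conjI)
qed

theorem mainTheorem4:
  assumes "lhlc_groupoid X G0 r s iv m"
    and "paracompact_space (subtopology X G0)"
    and "V \<subseteq> topspace X" and "G0 \<subseteq> X interior_of V"
  shows "\<exists>U. U \<subseteq> V \<and> G0 \<subseteq> X interior_of U \<and> diagonally_compact X r s m U"
proof -
  note G = assms(1)
  define Y where "Y = subtopology X G0"
  note B = lhlc_basics[OF G]
  note G0X = B(1) and rsG = B(2) and uni = B(3) and lc = B(8)
  have tY: "topspace Y = G0" using G0X unfolding Y_def by auto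
  have rc: "continuous_map X Y r" unfolding Y_def by (rule B(4))
  have sc: "continuous_map X Y s" unfolding Y_def by (rule B(5))
  have H: "Hausdorff_space Y" unfolding Y_def by (rule B(6))
  have "\<forall>u\<in>G0. \<exists>C. compactin X C \<and> u \<in> X interior_of C \<and> C \<subseteq> X interior_of V"
  proof
    fix u assume "u \<in> G0"
    thus "\<exists>C. compactin X C \<and> u \<in> X interior_of C \<and> C \<subseteq> X interior_of V"
      using cpt_nbhd_in_open[OF lc, of "X interior_of V" u] assms(4) openin_interior_of by blast
  qed
  then obtain C where C: "\<And>u. u \<in> G0 \<Longrightarrow> compactin X (C u) \<and> u \<in> X interior_of (C u) \<and> C u \<subseteq> X interior_of V"
    by metis
  define \<U> where "\<U> = (\<lambda>u. G0 \<inter> X interior_of C u) ` G0"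
  have Uo: "\<forall>Q\<in>\<U>. openin Y Q"
  proof
    fix Q assume "Q \<in> \<U>"
    then obtain u where "Q = G0 \<inter> X interior_of C u" unfolding \<U>_def by blast
    thus "openin Y Q" unfolding Y_def using openin_subtopology_Int2[OF openin_interior_of] by simp
  qed
  have Ucov: "topspace Y \<subseteq> \<Union>\<U>"
  proof
    fix u assume "u \<in> topspace Y"
    hence u: "u \<in> G0" using tY by simp
    hence "u \<in> G0 \<inter> X interior_of C u" using C[OF u] by simp
    moreover have "G0 \<inter> X interior_of C u \<in> \<U>" unfolding \<U>_def using u by (rule imageI)
    ultimately show "u \<in> \<Union>\<U>" by (rule UnionI[rotated])
  qed
  have pc: "\<forall>\<U>. (\<forall>U\<in>\<U>. openin Y U) \<and> topspace Y \<subseteq> \<Union>\<U> \<longrightarrow>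
       (\<exists>\<V>. (\<forall>V\<in>\<V>. openin Y V) \<and> topspace Y \<subseteq> \<Union>\<V> \<and>
             (\<forall>V\<in>\<V>. \<exists>U\<in>\<U>. V \<subseteq> U) \<and>
             (\<forall>x\<in>topspace Y. \<exists>N. openin Y N \<and> x \<in> N \<and>
                finite {V\<in>\<V>. V \<inter> N \<noteq> {}}))"
    using assms(2) unfolding paracompact_space_def Y_def by (elim conjE)
  have ex: "\<exists>\<V>. (\<forall>V\<in>\<V>. openin Y V) \<and> topspace Y \<subseteq> \<Union>\<V> \<and>
             (\<forall>V\<in>\<V>. \<exists>U\<in>\<U>. V \<subseteq> U) \<and>
             (\<forall>x\<in>topspace Y. \<exists>N. openin Y N \<and> x \<in> N \<and>
                finite {V\<in>\<V>. V \<inter> N \<noteq> {}})"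
    using pc[rule_format, OF conjI[OF Uo Ucov]] .
  obtain \<V> where VV: "\<forall>W\<in>\<V>. openin Y W" "topspace Y \<subseteq> \<Union>\<V>" "\<forall>W\<in>\<V>. \<exists>Q\<in>\<U>. W \<subseteq> Q"
    "\<forall>x\<in>topspace Y. \<exists>N. openin Y N \<and> x \<in> N \<and> finite {W\<in>\<V>. W \<inter> N \<noteq> {}}"
    using ex by (elim exE conjE)
  have "\<forall>W\<in>\<V>. \<exists>u. u \<in> G0 \<and> W \<subseteq> X interior_of C u"
  proof
    fix W assume "W \<in> \<V>"
    then obtain Q where Q: "Q \<in> \<U>" "W \<subseteq> Q" using VV(3) by blast
    then obtain u where u: "u \<in> G0" "Q = G0 \<inter> X interior_of C u" unfolding \<U>_def by blast
    show "\<exists>u. u \<in> G0 \<and> W \<subseteq> X interior_of C u" using u Q(2) by blast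
  qed
  then obtain p where p: "\<And>W. W \<in> \<V> \<Longrightarrow> p W \<in> G0 \<and> W \<subseteq> X interior_of C (p W)"
    by metis
  define K where "K W = C (p W) \<inter> ({a\<in>topspace X. r a \<in> Y closure_of W} \<inter> {a\<in>topspace X. s a \<in> Y closure_of W})" for W
  define U where "U = \<Union>(K ` \<V>)"
  have Kc: "compactin X (K W \<inter> {a\<in>topspace X. f a \<in> L})"
    if W: "W \<in> \<V>" and fc: "continuous_map X Y f" and L: "closedin Y L" for W f L
  proof -
    have cl: "closedin Y (Y closure_of W)" by (rule closedin_closure_of)
    have "closedin X ({a\<in>topspace X. r a \<in> Y closure_of W} \<inter> {a\<in>topspace X. s a \<in> Y closure_of W} \<inter> {a\<in>topspace X. f a \<in> L})"
      by (intro closedin_Int closedin_continuous_map_preimage[OF rc cl]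
             closedin_continuous_map_preimage[OF sc cl] closedin_continuous_map_preimage[OF fc L])
    moreover have "compactin X (C (p W))" using C[OF conjunct1[OF p[OF W]]] by (elim conjE)
    ultimately have "compactin X (C (p W) \<inter> ({a\<in>topspace X. r a \<in> Y closure_of W} \<inter> {a\<in>topspace X. s a \<in> Y closure_of W} \<inter> {a\<in>topspace X. f a \<in> L}))"
      by (rule compact_Int_closedin[rotated])
    thus ?thesis unfolding K_def by (simp only: Int_assoc)
  qed
  have KV: "K W \<subseteq> V" if "W \<in> \<V>" for W
  proof -
    have "C (p W) \<subseteq> X interior_of V" using C[OF conjunct1[OF p[OF that]]] by (elim conjE)
    thus ?thesis using interior_of_subset[of X V] unfolding K_def by blast
  qed
  have UV: "U \<subseteq> V" unfolding U_def using KV by blast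
  have intU: "G0 \<subseteq> X interior_of U"
  proof
    fix u assume u: "u \<in> G0"
    then obtain W where W: "W \<in> \<V>" "u \<in> W" using VV(2) tY by blast
    define Op where "Op = X interior_of C (p W) \<inter> ({a\<in>topspace X. r a \<in> W} \<inter> {a\<in>topspace X. s a \<in> W})"
    have "openin X Op" unfolding Op_def
      using openin_continuous_map_preimage[OF rc] openin_continuous_map_preimage[OF sc] VV(1) W(1)
      by (intro openin_Int) auto
    moreover have "u \<in> Op" unfolding Op_def using u W p uni G0X by auto
    moreover have "Op \<subseteq> K W"
    proof -
      have "W \<subseteq> Y closure_of W" using VV(1) W(1) closure_of_subset openin_subset by metis
      thus ?thesis unfolding Op_def K_def using interior_of_subset[of X "C (p W)"] by blast
    qed
    moreover have "K W \<subseteq> U" unfolding U_def using W(1) by blast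
    ultimately show "u \<in> X interior_of U" using interior_of_maximal[of Op U X] by blast
  qed
  have Uf: "compactin X (U \<inter> {a\<in>topspace X. f a \<in> L})"
    if fc: "continuous_map X Y f" and f: "\<And>W a. W \<in> \<V> \<Longrightarrow> a \<in> K W \<Longrightarrow> f a \<in> Y closure_of W"
      and L: "compactin Y L" for f L
  proof -
    have Lc: "closedin Y L" using L H compactin_imp_closedin by blast
    define F where "F = {W\<in>\<V>. Y closure_of W \<inter> L \<noteq> {}}"
    have Ff: "finite F" unfolding F_def using lf_finite[OF VV(4) L] .
    have "U \<inter> {a\<in>topspace X. f a \<in> L} = (\<Union>W\<in>F. K W \<inter> {a\<in>topspace X. f a \<in> L})"
    proof
      show "U \<inter> {a\<in>topspace X. f a \<in> L} \<subseteq> (\<Union>W\<in>F. K W \<inter> {a\<in>topspace X. f a \<in> L})"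
      proof
        fix a assume a: "a \<in> U \<inter> {a\<in>topspace X. f a \<in> L}"
        then obtain W where W: "W \<in> \<V>" "a \<in> K W" unfolding U_def by blast
        hence "f a \<in> Y closure_of W" using f by blast
        hence "W \<in> F" unfolding F_def using W a by blast
        thus "a \<in> (\<Union>W\<in>F. K W \<inter> {a\<in>topspace X. f a \<in> L})" using W a by blast
      qed
      show "(\<Union>W\<in>F. K W \<inter> {a\<in>topspace X. f a \<in> L}) \<subseteq> U \<inter> {a\<in>topspace X. f a \<in> L}"
        unfolding U_def F_def by blast
    qed
    moreover have "compactin X (\<Union>W\<in>F. K W \<inter> {a\<in>topspace X. f a \<in> L})"
      using Ff Kc[OF _ fc Lc] unfolding F_def by (intro compactin_Union) auto
    ultimately show ?thesis by (simp only:)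
  qed
  have Ks: "s a \<in> Y closure_of W" if "a \<in> K W" for W a using that unfolding K_def by blast
  have Kr: "r a \<in> Y closure_of W" if "a \<in> K W" for W a using that unfolding K_def by blast
  have Us: "compactin X (U \<inter> {a\<in>topspace X. s a \<in> L})" if "compactin (subtopology X G0) L" for L
    using Uf[OF sc Ks that[folded Y_def]] .
  have Ur: "compactin X (U \<inter> {a\<in>topspace X. r a \<in> L})" if "compactin (subtopology X G0) L" for L
    using Uf[OF rc Kr that[folded Y_def]] .
  have UX: "U \<subseteq> topspace X" using UV assms(3) by blast
  have "diagonally_compact X r s m U"
    unfolding diagonally_compact_def using setprod_cpt[OF G Us Ur _ UX] by blast
  thus ?thesis using UV intU by blast
qed

end
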